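(* Let $M$ be a Baire space, $\mathcal{B}(M)$ its Borel $\sigma$-algebra, $\mathcal{I}_1\subseteq\mathcal{B}(M)$ the $\sigma$-ideal of meagre Borel sets, and $\mathcal{Q}^2(\mathcal{B}(M)):=\{\mathfrak{C}\in\mathcal{Q}(\mathcal{B}(M)):\mathfrak{C}\cap\mathcal{I}_1=\emptyset\}$ with the subspace topology. For $\mathfrak{B}\in\mathcal{Q}(\mathcal{T}(M))$ put $\mathfrak{C}(\mathfrak{B}):=\{A\in\mathcal{B}(M): \exists U\in\mathfrak{B} \text{ with } A\,\triangle\,U\in\mathcal{I}_1\}$. Then $\mathfrak{C}(\mathfrak{B})\in\mathcal{Q}^2(\mathcal{B}(M))$, and $\pi_M:\mathcal{Q}(\mathcal{T}(M))\to\mathcal{Q}^2(\mathcal{B}(M))$, $\mathfrak{B}\mapsto\mathfrak{C}(\mathfrak{B})$, is a homeomorphism.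
   Context: $\mathcal{T}(M)$ is the lattice of open subsets of $M$ (join union, meet intersection). A Baire space is a space in which no nonempty open set is meagre (a countable union of nowhere dense sets). A quasipoint in a lattice $\mathbb{L}$ with least element $0$ is a maximal (w.r.t. inclusion) subset $\mathfrak{B}\subseteq\mathbb{L}$ such that $\mathfrak{B}\neq\emptyset$, $0\notin\mathfrak{B}$, and for all $a,b\in\mathfrak{B}$ there is $c\in\mathfrak{B}$ with $c\le a\wedge b$. $\mathcal{Q}(\mathbb{L})$ denotes the set of quasipoints; for $a\in\mathbb{L}$ put $\mathcal{Q}_a(\mathbb{L})=\{\mathfrak{B}\in\mathcal{Q}(\mathbb{L}) : a\in\mathfrak{B}\}$. The Stone spectrum is $\mathcal{Q}(\mathbb{L})$ with the topology having the sets $\mathcal{Q}_a(\mathbb{L})$ as a basis. *)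

theory Defs
  imports "HOL-Analysis.Analysis"
begin

definition nowhere_dense_in :: "'a topology \<Rightarrow> 'a set \<Rightarrow> bool" where
  "nowhere_dense_in X S \<longleftrightarrow> S \<subseteq> topspace X \<and> X interior_of (X closure_of S) = {}"

definition meagre_in :: "'a topology \<Rightarrow> 'a set \<Rightarrow> bool" where
  "meagre_in X S \<longleftrightarrow> (\<exists>\<F>. countable \<F> \<and> (\<forall>N\<in>\<F>. nowhere_dense_in X N) \<and> S = \<Union>\<F>)"

definition Baire_space :: "'a topology \<Rightarrow> bool" where
  "Baire_space X \<longleftrightarrow> (\<forall>U. openin X U \<and> U \<noteq> {} \<longrightarrow> \<not> meagre_in X U)"

definition open_sets :: "'a topology \<Rightarrow> 'a set set" where
  "open_sets X = {U. openin X U}"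

definition borel_sets :: "'a topology \<Rightarrow> 'a set set" where
  "borel_sets X = sigma_sets (topspace X) {U. openin X U}"

definition meagre_borel :: "'a topology \<Rightarrow> 'a set set" where
  "meagre_borel X = {A \<in> borel_sets X. meagre_in X A}"

definition filterbase_in :: "'a set set \<Rightarrow> 'a set set \<Rightarrow> bool" where
  "filterbase_in L B \<longleftrightarrow> B \<subseteq> L \<and> B \<noteq> {} \<and> {} \<notin> B \<and>
     (\<forall>a\<in>B. \<forall>b\<in>B. \<exists>c\<in>B. c \<subseteq> a \<inter> b)"

definition quasipoint :: "'a set set \<Rightarrow> 'a set set \<Rightarrow> bool" where
  "quasipoint L B \<longleftrightarrow> filterbase_in L B \<and> (\<forall>B'. filterbase_in L B' \<and> B \<subseteq> B' \<longrightarrow> B' = B)"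

definition quasipoints :: "'a set set \<Rightarrow> 'a set set set" where
  "quasipoints L = {B. quasipoint L B}"

definition quasipoints_at :: "'a set set \<Rightarrow> 'a set \<Rightarrow> 'a set set set" where
  "quasipoints_at L a = {B \<in> quasipoints L. a \<in> B}"

definition stone_spectrum :: "'a set set \<Rightarrow> 'a set set topology" where
  "stone_spectrum L = topology_generated_by {quasipoints_at L a | a. a \<in> L}"

definition quasipoints2 :: "'a topology \<Rightarrow> 'a set set set" where
  "quasipoints2 X = {C \<in> quasipoints (borel_sets X). C \<inter> meagre_borel X = {}}"

definition pi_map :: "'a topology \<Rightarrow> 'a set set \<Rightarrow> 'a set set" where
  "pi_map X B = {A \<in> borel_sets X. \<exists>U\<in>B. (A - U) \<union> (U - A) \<in> meagre_borel X}"

end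

theory Submission
  imports Defs
begin

lemma nd_subset: "nowhere_dense_in X S \<Longrightarrow> T \<subseteq> S \<Longrightarrow> nowhere_dense_in X T"
  unfolding nowhere_dense_in_def
proof (intro conjI)
  assume a: "S \<subseteq> topspace X \<and> X interior_of X closure_of S = {}" "T \<subseteq> S"
  then show "T \<subseteq> topspace X" by blast
  have "X interior_of X closure_of T \<subseteq> X interior_of X closure_of S"
    by (intro interior_of_mono closure_of_mono a(2))
  then show "X interior_of X closure_of T = {}" using a(1) by blast
qed

lemma meagre_empty: "meagre_in X {}"
  unfolding meagre_in_def by (rule exI[of _ "{}"]) auto

lemma nd_meagre: "nowhere_dense_in X S \<Longrightarrow> meagre_in X S"
  unfolding meagre_in_def by (rule exI[of _ "{S}"]) auto

lemma meagre_subset: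
  assumes "meagre_in X S" "T \<subseteq> S" shows "meagre_in X T"
proof -
  obtain F where F: "countable F" "\<forall>N\<in>F. nowhere_dense_in X N" "S = \<Union>F"
    using assms(1) unfolding meagre_in_def by blast
  show ?thesis unfolding meagre_in_def
    apply (rule exI[of _ "(\<lambda>N. N \<inter> T) ` F"])
    using F assms(2) nd_subset[of X _ "_ \<inter> T"] by auto
qed

lemma meagre_UN:
  assumes "countable I" "\<And>i. i \<in> I \<Longrightarrow> meagre_in X (A i)"
  shows "meagre_in X (\<Union>i\<in>I. A i)"
proof -
  have "\<forall>i\<in>I. \<exists>F. countable F \<and> (\<forall>N\<in>F. nowhere_dense_in X N) \<and> A i = \<Union>F"
    using assms(2) unfolding meagre_in_def by blast
  then obtain F where F: "\<And>i. i\<in>I \<Longrightarrow> countable (F i) \<and> (\<forall>N\<in>F i. nowhere_dense_in X N) \<and> A i = \<Union>(F i)"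
    by metis
  show ?thesis unfolding meagre_in_def
    apply (rule exI[of _ "\<Union>i\<in>I. F i"])
    using F assms(1) by auto
qed

lemma meagre_Un: "meagre_in X A \<Longrightarrow> meagre_in X B \<Longrightarrow> meagre_in X (A \<union> B)"
  using meagre_UN[of "{True,False}" X "\<lambda>b. if b then A else B"] by (auto simp: Un_commute)

lemma meagre_topspace: "meagre_in X S \<Longrightarrow> S \<subseteq> topspace X"
  unfolding meagre_in_def nowhere_dense_in_def by blast

lemma boundary_nd:
  assumes "openin X U" shows "nowhere_dense_in X (X closure_of U - U)"
proof -
  have cl: "closedin X (X closure_of U - U)"
    using assms by (simp add: closedin_diff)
  have "X interior_of (X closure_of U - U) = {}"
    unfolding interior_of_eq_empty
  proof (intro allI impI)
    fix T assume T: "openin X T \<and> T \<subseteq> X closure_of U - U"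
    then have "T \<inter> U = {}" by blast
    then have "T \<inter> X closure_of U = {}" using T openin_Int_closure_of_eq_empty by blast
    then show "T = {}" using T by blast
  qed
  then show ?thesis unfolding nowhere_dense_in_def
    using cl closure_of_closedin closure_of_subset_topspace by fastforce
qed

lemma borel_open: "openin X U \<Longrightarrow> U \<in> borel_sets X"
  unfolding borel_sets_def by (rule sigma_sets.Basic) simp

lemma borel_sub: "A \<in> borel_sets X \<Longrightarrow> A \<subseteq> topspace X"
  unfolding borel_sets_def by (rule sigma_sets_into_sp[of "{U. openin X U}"]) (auto dest: openin_subset)

lemma borel_diff: "A \<in> borel_sets X \<Longrightarrow> B \<in> borel_sets X \<Longrightarrow> A - B \<in> borel_sets X"
proof -
  have "sigma_algebra (topspace X) (borel_sets X)"
    unfolding borel_sets_def by (rule sigma_algebra_sigma_sets) (auto dest: openin_subset)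
  then show "A \<in> borel_sets X \<Longrightarrow> B \<in> borel_sets X \<Longrightarrow> A - B \<in> borel_sets X"
    using sigma_algebra.axioms(1)[THEN algebra.axioms(1), THEN ring_of_sets.Diff] by blast
qed

lemma borel_Un: "A \<in> borel_sets X \<Longrightarrow> B \<in> borel_sets X \<Longrightarrow> A \<union> B \<in> borel_sets X"
  unfolding borel_sets_def by (rule sigma_sets_Un)

lemma borel_Int: "A \<in> borel_sets X \<Longrightarrow> B \<in> borel_sets X \<Longrightarrow> A \<inter> B \<in> borel_sets X"
  by (metis Diff_Diff_Int borel_diff)

lemma borel_top: "topspace X \<in> borel_sets X"
  by (simp add: borel_open)

lemma baire_property:
  assumes "A \<in> borel_sets X"
  shows "\<exists>U. openin X U \<and> meagre_in X ((A - U) \<union> (U - A))"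
  using assms unfolding borel_sets_def
proof (induction rule: sigma_sets.induct)
  case (Basic a) then show ?case using meagre_empty by (intro exI[of _ a]) simp
next
  case Empty then show ?case using meagre_empty by (intro exI[of _ "{}"]) simp
next
  case (Compl a)
  then obtain U where U: "openin X U" "meagre_in X ((a - U) \<union> (U - a))" by blast
  have asub: "a \<subseteq> topspace X" using Compl(1)
    by (rule sigma_sets_into_sp[of "{U. openin X U}", rotated]) (auto dest: openin_subset)
  define V where "V = topspace X - X closure_of U"
  have V: "openin X V" unfolding V_def by (simp add: openin_diff)
  have cs: "U \<subseteq> X closure_of U" using closure_of_subset[of U X] openin_subset[OF U(1)] by blast
  have "((topspace X - a) - V) \<union> (V - (topspace X - a)) \<subseteq> ((a - U) \<union> (U - a)) \<union> (X closure_of U - U)"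
  proof
    fix x assume x: "x \<in> ((topspace X - a) - V) \<union> (V - (topspace X - a))"
    show "x \<in> ((a - U) \<union> (U - a)) \<union> (X closure_of U - U)"
    proof (cases "x \<in> a")
      case True
      then have "x \<notin> X closure_of U" using x unfolding V_def by blast
      then have "x \<notin> U" using cs by blast
      then show ?thesis using True by blast
    next
      case False
      then have "x \<in> X closure_of U" using x unfolding V_def by blast
      then show ?thesis using False by blast
    qed
  qed
  moreover have "meagre_in X (((a - U) \<union> (U - a)) \<union> (X closure_of U - U))"
    using U boundary_nd nd_meagre meagre_Un by blast
  ultimately show ?case using V meagre_subset by blast
next
  case (Union a)
  then have "\<forall>i. \<exists>U. openin X U \<and> meagre_in X ((a i - U) \<union> (U - a i))" by blast
  then obtain U where U0: "\<forall>i. openin X (U i) \<and> meagre_in X ((a i - U i) \<union> (U i - a i))"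
    using choice[OF \<open>\<forall>i. \<exists>U. openin X U \<and> meagre_in X ((a i - U) \<union> (U - a i))\<close>] by (elim exE) simp
  have Uo: "\<And>i. openin X (U i)" using U0 by blast
  have Um: "\<And>i. meagre_in X ((a i - U i) \<union> (U i - a i))" using U0 by blast
  have "((\<Union>i. a i) - (\<Union>i. U i)) \<union> ((\<Union>i. U i) - (\<Union>i. a i)) \<subseteq> (\<Union>i\<in>UNIV. (a i - U i) \<union> (U i - a i))"
  proof
    fix x assume "x \<in> ((\<Union>i. a i) - (\<Union>i. U i)) \<union> ((\<Union>i. U i) - (\<Union>i. a i))"
    then obtain i where "x \<in> a i \<and> x \<notin> U i \<or> x \<in> U i \<and> x \<notin> a i" by blast
    then show "x \<in> (\<Union>i\<in>UNIV. (a i - U i) \<union> (U i - a i))" by blast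
  qed
  moreover have "meagre_in X (\<Union>i\<in>UNIV. (a i - U i) \<union> (U i - a i))"
    by (rule meagre_UN) (use Um in auto)
  moreover have "openin X (\<Union>i. U i)" using Uo by (intro openin_Union) auto
  ultimately show ?case by (intro exI[of _ "\<Union>i. U i"] conjI) (auto intro: meagre_subset)
qed

lemma qp_up:
  assumes "quasipoint L B" "a \<in> L" "b \<in> B" "b \<subseteq> a" shows "a \<in> B"
proof -
  have fb: "filterbase_in L B" using assms(1) unfolding quasipoint_def by blast
  have m1: "insert a B \<subseteq> L" using fb assms(2) unfolding filterbase_in_def by blast
  have "b \<noteq> {}" using fb assms(3) unfolding filterbase_in_def by blast
  then have "a \<noteq> {}" using assms(4) by blast
  then have m2: "{} \<notin> insert a B" using fb unfolding filterbase_in_def by blast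
  have m3: "\<exists>c\<in>insert a B. c \<subseteq> x \<inter> y" if xy: "x \<in> insert a B" "y \<in> insert a B" for x y
  proof -
    have "\<exists>b1\<in>B. b1 \<subseteq> x" using xy(1) assms(3,4) by blast
    moreover have "\<exists>b2\<in>B. b2 \<subseteq> y" using xy(2) assms(3,4) by blast
    ultimately obtain b1 b2 where bb: "b1 \<in> B" "b2 \<in> B" "b1 \<subseteq> x" "b2 \<subseteq> y" by blast
    have "\<forall>p\<in>B. \<forall>q\<in>B. \<exists>c\<in>B. c \<subseteq> p \<inter> q" using fb unfolding filterbase_in_def by blast
    then obtain c where "c \<in> B" "c \<subseteq> b1 \<inter> b2" using bb(1,2) by blast
    then show ?thesis using bb(3,4) by (intro bexI[of _ c]) auto
  qed
  have "filterbase_in L (insert a B)"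
    unfolding filterbase_in_def using m1 m2 m3 by blast
  moreover have "B \<subseteq> insert a B" by blast
  moreover have mx: "\<forall>B'. filterbase_in L B' \<and> B \<subseteq> B' \<longrightarrow> B' = B"
    using assms(1) unfolding quasipoint_def by blast
  ultimately have "insert a B = B" using spec[OF mx, of "insert a B"] by simp
  then show ?thesis by blast
qed

lemma qp_Int:
  assumes "quasipoint L B" "a \<in> B" "b \<in> B" "a \<inter> b \<in> L" shows "a \<inter> b \<in> B"
proof -
  obtain c where "c \<in> B" "c \<subseteq> a \<inter> b" using assms unfolding quasipoint_def filterbase_in_def by blast
  then show ?thesis using qp_up assms by blast
qed

lemma qp_crit:
  assumes "quasipoint L B" "\<And>x y. x \<in> L \<Longrightarrow> y \<in> L \<Longrightarrow> x \<inter> y \<in> L" "a \<in> L"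
    "\<And>b. b \<in> B \<Longrightarrow> a \<inter> b \<noteq> {}"
  shows "a \<in> B"
proof -
  have fb: "filterbase_in L B" using assms(1) unfolding quasipoint_def by blast
  define B' where "B' = B \<union> (\<lambda>b. a \<inter> b) ` B"
  have "filterbase_in L B'"
    unfolding filterbase_in_def
  proof (intro conjI ballI)
    show "B' \<subseteq> L" using fb assms(2,3) unfolding filterbase_in_def B'_def by blast
    show "B' \<noteq> {}" using fb unfolding filterbase_in_def B'_def by blast
    show "{} \<notin> B'" using fb assms(4) unfolding filterbase_in_def B'_def by blast
    fix x y assume xy: "x \<in> B'" "y \<in> B'"
    have "\<exists>b1\<in>B. a \<inter> b1 \<subseteq> x" using xy(1) unfolding B'_def by blast
    moreover have "\<exists>b2\<in>B. a \<inter> b2 \<subseteq> y" using xy(2) unfolding B'_def by blast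
    ultimately obtain b1 b2 where "b1 \<in> B" "b2 \<in> B" "a \<inter> b1 \<subseteq> x" "a \<inter> b2 \<subseteq> y" by blast
    then obtain c where "c \<in> B" "c \<subseteq> b1 \<inter> b2" using fb unfolding filterbase_in_def by blast
    then show "\<exists>c\<in>B'. c \<subseteq> x \<inter> y" using \<open>a \<inter> b1 \<subseteq> x\<close> \<open>a \<inter> b2 \<subseteq> y\<close>
      unfolding B'_def by (intro bexI[of _ "a \<inter> c"]) auto
  qed
  moreover have "B \<subseteq> B'" unfolding B'_def by blast
  moreover have mx: "\<forall>B''. filterbase_in L B'' \<and> B \<subseteq> B'' \<longrightarrow> B'' = B"
    using assms(1) unfolding quasipoint_def by blast
  ultimately have "B' = B" using spec[OF mx, of B'] by simp
  obtain b where "b \<in> B" using fb unfolding filterbase_in_def by blast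
  then have "a \<inter> b \<in> B" using \<open>B' = B\<close> unfolding B'_def by blast
  then show ?thesis using qp_up[OF assms(1) assms(3)] by blast
qed

lemma qp_sub: "quasipoint L B \<Longrightarrow> b \<in> B \<Longrightarrow> b \<in> L"
  unfolding quasipoint_def filterbase_in_def by blast

lemma qp_ne: "quasipoint L B \<Longrightarrow> b \<in> B \<Longrightarrow> b \<noteq> {}"
  unfolding quasipoint_def filterbase_in_def by blast

lemma open_sets_Int: "x \<in> open_sets M \<Longrightarrow> y \<in> open_sets M \<Longrightarrow> x \<inter> y \<in> open_sets M"
  unfolding open_sets_def by blast

lemma borel_sets_Int: "x \<in> borel_sets M \<Longrightarrow> y \<in> borel_sets M \<Longrightarrow> x \<inter> y \<in> borel_sets M"
  by (rule borel_Int)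

lemma baireD: "Baire_space M \<Longrightarrow> openin M U \<Longrightarrow> meagre_in M U \<Longrightarrow> U = {}"
  unfolding Baire_space_def by blast

lemma qp_open_top:
  assumes "quasipoint (open_sets M) B" shows "topspace M \<in> B"
proof -
  obtain b where "b \<in> B" using assms unfolding quasipoint_def filterbase_in_def by blast
  moreover have "b \<subseteq> topspace M" using calculation assms
    unfolding quasipoint_def filterbase_in_def open_sets_def by (auto dest: openin_subset)
  ultimately show ?thesis using qp_up[OF assms] unfolding open_sets_def by auto
qed

lemma L_open:
  assumes "Baire_space M" "quasipoint (open_sets M) B" "openin M U" "V \<in> B"
    "meagre_in M (sym_diff U V)"
  shows "U \<in> B"
proof (rule qp_crit[OF assms(2) open_sets_Int])
  show "U \<in> open_sets M" using assms(3) unfolding open_sets_def by simp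
  fix W assume W: "W \<in> B"
  show "U \<inter> W \<noteq> {}"
  proof
    assume e: "U \<inter> W = {}"
    have VW: "V \<inter> W \<in> B"
      by (intro qp_Int[OF assms(2) assms(4) W] open_sets_Int qp_sub[OF assms(2)] assms(4) W)
    have "V \<inter> W \<subseteq> sym_diff U V" using e by blast
    then have "meagre_in M (V \<inter> W)" using assms(5) meagre_subset by blast
    moreover have "openin M (V \<inter> W)" using qp_sub[OF assms(2) VW]
      unfolding open_sets_def by simp
    ultimately have "V \<inter> W = {}" using baireD[OF assms(1)] by simp
    then show False using qp_ne[OF assms(2) VW] by simp
  qed
qed

lemma sym_diff_borel: "A \<in> borel_sets M \<Longrightarrow> B \<in> borel_sets M \<Longrightarrow> sym_diff A B \<in> borel_sets M"
  by (simp add: borel_Un borel_diff)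

lemma part1:
  assumes "Baire_space M" "quasipoint (open_sets M) B"
  shows "pi_map M B \<in> quasipoints2 M"
proof -
  have fbB: "filterbase_in (open_sets M) B" using assms(2) unfolding quasipoint_def by blast
  have Bopen: "\<And>U. U \<in> B \<Longrightarrow> openin M U" using fbB unfolding filterbase_in_def open_sets_def by blast
  have Bne: "\<And>U. U \<in> B \<Longrightarrow> U \<noteq> {}" using fbB unfolding filterbase_in_def by blast
  have mem: "A \<in> pi_map M B \<longleftrightarrow> A \<in> borel_sets M \<and> (\<exists>U\<in>B. meagre_in M (sym_diff A U))" for A
    unfolding pi_map_def meagre_borel_def using sym_diff_borel borel_open Bopen by blast
  have BsubC: "B \<subseteq> pi_map M B" using mem Bopen borel_open meagre_empty by fastforce
  have fb: "filterbase_in (borel_sets M) (pi_map M B)"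
    unfolding filterbase_in_def
  proof (intro conjI ballI)
    show "pi_map M B \<subseteq> borel_sets M" unfolding pi_map_def by blast
    show "pi_map M B \<noteq> {}" using BsubC fbB unfolding filterbase_in_def by blast
    show "{} \<notin> pi_map M B"
    proof
      assume "{} \<in> pi_map M B"
      then obtain U where "U \<in> B" "meagre_in M U" using mem by auto
      then show False using baireD[OF assms(1)] Bopen Bne by blast
    qed
    fix x y assume xy: "x \<in> pi_map M B" "y \<in> pi_map M B"
    then obtain U V where UV: "U \<in> B" "V \<in> B" "meagre_in M (sym_diff x U)" "meagre_in M (sym_diff y V)"
      "x \<in> borel_sets M" "y \<in> borel_sets M" using mem by blast
    have "U \<inter> V \<in> B"
      by (intro qp_Int[OF assms(2) UV(1,2)] open_sets_Int qp_sub[OF assms(2)] UV(1,2))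
    moreover have "meagre_in M (sym_diff (x \<inter> y) (U \<inter> V))"
      by (rule meagre_subset[OF meagre_Un[OF UV(3,4)]]) blast
    ultimately have "x \<inter> y \<in> pi_map M B" using mem borel_Int UV by blast
    then show "\<exists>c\<in>pi_map M B. c \<subseteq> x \<inter> y" by (intro bexI[of _ "x \<inter> y"]) auto
  qed
  have maxl: "C' = pi_map M B" if C': "filterbase_in (borel_sets M) C'" "pi_map M B \<subseteq> C'" for C'
  proof
    show "C' \<subseteq> pi_map M B"
    proof
      fix A assume A: "A \<in> C'"
      have Ab: "A \<in> borel_sets M" using A C'(1) unfolding filterbase_in_def by blast
      obtain U where U: "openin M U" "meagre_in M (sym_diff A U)" using baire_property[OF Ab] by blast
      have "U \<in> B"
      proof (rule qp_crit[OF assms(2) open_sets_Int])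
        show "U \<in> open_sets M" using U unfolding open_sets_def by simp
        fix V assume V: "V \<in> B"
        show "U \<inter> V \<noteq> {}"
        proof
          assume e: "U \<inter> V = {}"
          define N where "N = sym_diff A U"
          have Nb: "N \<in> borel_sets M" unfolding N_def using sym_diff_borel Ab borel_open U by blast
          have Nsub: "N \<subseteq> topspace M" using Nb borel_sub by blast
          have "topspace M - N \<in> pi_map M B"
            unfolding mem
          proof (intro conjI bexI)
            show "topspace M - N \<in> borel_sets M" using Nb borel_top borel_diff by blast
            show "topspace M \<in> B" using qp_open_top[OF assms(2)] .
            have "sym_diff (topspace M - N) (topspace M) = N" using Nsub by blast
            then show "meagre_in M (sym_diff (topspace M - N) (topspace M))" using U N_def by simp
          qed
          then have c1: "topspace M - N \<in> C'" using C'(2) by blast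
          have c2: "V \<in> C'" using V BsubC C'(2) by blast
          obtain d1 where d1: "d1 \<in> C'" "d1 \<subseteq> A \<inter> V" using C'(1) A c2 unfolding filterbase_in_def by blast
          obtain d2 where d2: "d2 \<in> C'" "d2 \<subseteq> d1 \<inter> (topspace M - N)"
            using C'(1) d1(1) c1 unfolding filterbase_in_def by blast
          have "d2 = {}" using d1 d2 e unfolding N_def by blast
          then show False using d2 C'(1) unfolding filterbase_in_def by blast
        qed
      qed
      then show "A \<in> pi_map M B" using mem Ab U by blast
    qed
  qed (use C' in blast)
  have "quasipoint (borel_sets M) (pi_map M B)"
    unfolding quasipoint_def using fb maxl by blast
  moreover have "pi_map M B \<inter> meagre_borel M = {}"
  proof (rule ccontr)
    assume "pi_map M B \<inter> meagre_borel M \<noteq> {}"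
    then obtain A where A: "A \<in> pi_map M B" "meagre_in M A" unfolding meagre_borel_def by blast
    then obtain U where U: "U \<in> B" "meagre_in M (sym_diff A U)" using mem by blast
    have "meagre_in M U" by (rule meagre_subset[OF meagre_Un[OF A(2) U(2)]]) blast
    then show False using baireD[OF assms(1)] Bopen Bne U(1) by blast
  qed
  ultimately show ?thesis unfolding quasipoints2_def quasipoints_def by blast
qed

lemma pi_mem:
  assumes "B \<subseteq> open_sets M"
  shows "A \<in> pi_map M B \<longleftrightarrow> A \<in> borel_sets M \<and> (\<exists>U\<in>B. meagre_in M (sym_diff A U))"
proof
  assume "A \<in> pi_map M B"
  then show "A \<in> borel_sets M \<and> (\<exists>U\<in>B. meagre_in M (sym_diff A U))"
    unfolding pi_map_def meagre_borel_def by blast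
next
  assume a: "A \<in> borel_sets M \<and> (\<exists>U\<in>B. meagre_in M (sym_diff A U))"
  then obtain U where U: "U \<in> B" "meagre_in M (sym_diff A U)" by blast
  have "U \<in> borel_sets M" using U(1) assms borel_open unfolding open_sets_def by blast
  then have "sym_diff A U \<in> meagre_borel M" using a U(2) sym_diff_borel unfolding meagre_borel_def by blast
  then show "A \<in> pi_map M B" unfolding pi_map_def using a U(1) by blast
qed

lemma topsp: "topspace (stone_spectrum L) = quasipoints L"
proof -
  have "\<Union>{quasipoints_at L a | a. a \<in> L} = quasipoints L"
  proof
    show "\<Union>{quasipoints_at L a | a. a \<in> L} \<subseteq> quasipoints L" unfolding quasipoints_at_def by blast
    show "quasipoints L \<subseteq> \<Union>{quasipoints_at L a | a. a \<in> L}"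
    proof
      fix B assume B: "B \<in> quasipoints L"
      then have qB: "quasipoint L B" unfolding quasipoints_def by simp
      then obtain b where b: "b \<in> B" unfolding quasipoint_def filterbase_in_def by blast
      then have "b \<in> L" using qp_sub[OF qB] by blast
      moreover have "B \<in> quasipoints_at L b" using B b unfolding quasipoints_at_def by blast
      ultimately show "B \<in> \<Union>{quasipoints_at L a | a. a \<in> L}" by blast
    qed
  qed
  then show ?thesis unfolding stone_spectrum_def by simp
qed

lemma q2D: "C \<in> quasipoints2 M \<Longrightarrow> quasipoint (borel_sets M) C"
  unfolding quasipoints2_def quasipoints_def by blast

lemma q2_compl:
  assumes "C \<in> quasipoints2 M" "N \<in> meagre_borel M"
  shows "topspace M - N \<in> C"
proof (rule qp_crit[OF q2D[OF assms(1)] borel_sets_Int])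
  have Nb: "N \<in> borel_sets M" using assms(2) unfolding meagre_borel_def by blast
  then show "topspace M - N \<in> borel_sets M" using borel_diff borel_top by blast
  fix c assume c: "c \<in> C"
  show "(topspace M - N) \<inter> c \<noteq> {}"
  proof
    assume e: "(topspace M - N) \<inter> c = {}"
    have cb: "c \<in> borel_sets M" using qp_sub[OF q2D[OF assms(1)] c] .
    then have "c \<subseteq> N" using e borel_sub by blast
    then have "meagre_in M c" using assms(2) meagre_subset unfolding meagre_borel_def by blast
    then have "c \<in> meagre_borel M" using cb unfolding meagre_borel_def by blast
    then show False using c assms(1) unfolding quasipoints2_def by blast
  qed
qed

lemma q2_transfer:
  assumes "C \<in> quasipoints2 M" "A \<in> C" "A' \<in> borel_sets M" "meagre_in M (sym_diff A A')"
  shows "A' \<in> C"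
proof -
  have q: "quasipoint (borel_sets M) C" using q2D[OF assms(1)] .
  have Ab: "A \<in> borel_sets M" using qp_sub[OF q assms(2)] .
  have "sym_diff A A' \<in> meagre_borel M"
    unfolding meagre_borel_def using sym_diff_borel[OF Ab assms(3)] assms(4) by blast
  then have t: "topspace M - sym_diff A A' \<in> C" using q2_compl[OF assms(1)] by blast
  have "A \<inter> (topspace M - sym_diff A A') \<in> C"
    by (intro qp_Int[OF q assms(2) t] borel_sets_Int qp_sub[OF q] assms(2) t)
  moreover have "A \<inter> (topspace M - sym_diff A A') \<subseteq> A'" by blast
  ultimately show ?thesis using qp_up[OF q assms(3)] by blast
qed

lemma g_qp:
  assumes "Baire_space M" "C \<in> quasipoints2 M"
  shows "quasipoint (open_sets M) (C \<inter> open_sets M)"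
proof -
  have q: "quasipoint (borel_sets M) C" using q2D[OF assms(2)] .
  obtain c0 where c0: "c0 \<in> C" using q unfolding quasipoint_def filterbase_in_def by blast
  have topC: "topspace M \<in> C"
    using qp_up[OF q borel_top c0] borel_sub[OF qp_sub[OF q c0]] by blast
  have fb: "filterbase_in (open_sets M) (C \<inter> open_sets M)"
    unfolding filterbase_in_def
  proof (intro conjI)
    show "C \<inter> open_sets M \<subseteq> open_sets M" by blast
    show "C \<inter> open_sets M \<noteq> {}" using topC unfolding open_sets_def by blast
    show "{} \<notin> C \<inter> open_sets M" using qp_ne[OF q] by blast
    show "\<forall>a\<in>C \<inter> open_sets M. \<forall>b\<in>C \<inter> open_sets M. \<exists>c\<in>C \<inter> open_sets M. c \<subseteq> a \<inter> b"
    proof (intro ballI)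
      fix a b assume ab: "a \<in> C \<inter> open_sets M" "b \<in> C \<inter> open_sets M"
      have "a \<inter> b \<in> C" using ab
        by (intro qp_Int[OF q] borel_sets_Int qp_sub[OF q]) auto
      moreover have "a \<inter> b \<in> open_sets M" using ab open_sets_Int by blast
      ultimately show "\<exists>c\<in>C \<inter> open_sets M. c \<subseteq> a \<inter> b" by (intro bexI[of _ "a \<inter> b"]) auto
    qed
  qed
  have maxl: "B' = C \<inter> open_sets M" if B': "filterbase_in (open_sets M) B'" "C \<inter> open_sets M \<subseteq> B'" for B'
  proof
    show "B' \<subseteq> C \<inter> open_sets M"
    proof
      fix U assume U: "U \<in> B'"
      have Uo: "U \<in> open_sets M" using U B'(1) unfolding filterbase_in_def by blast
      have "U \<in> C"
      proof (rule qp_crit[OF q borel_sets_Int])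
        show "U \<in> borel_sets M" using Uo borel_open unfolding open_sets_def by blast
        fix c assume c: "c \<in> C"
        have cb: "c \<in> borel_sets M" using qp_sub[OF q c] .
        obtain W where W: "openin M W" "meagre_in M (sym_diff c W)" using baire_property[OF cb] by blast
        have WC: "W \<in> C" using q2_transfer[OF assms(2) c borel_open[OF W(1)] W(2)] .
        then have "W \<in> B'" using B'(2) W(1) unfolding open_sets_def by blast
        then obtain d where d: "d \<in> B'" "d \<subseteq> U \<inter> W" using B'(1) U unfolding filterbase_in_def by blast
        show "U \<inter> c \<noteq> {}"
        proof
          assume e: "U \<inter> c = {}"
          have "d \<subseteq> sym_diff c W" using d(2) e by blast
          then have "meagre_in M d" using W(2) meagre_subset by blast
          moreover have "openin M d" using d(1) B'(1) unfolding filterbase_in_def open_sets_def by blast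
          ultimately have "d = {}" using baireD[OF assms(1)] by blast
          then show False using d(1) B'(1) unfolding filterbase_in_def by blast
        qed
      qed
      then show "U \<in> C \<inter> open_sets M" using Uo by blast
    qed
  qed (use B' in blast)
  show ?thesis unfolding quasipoint_def using fb maxl by blast
qed

lemma pi_g:
  assumes "Baire_space M" "C \<in> quasipoints2 M"
  shows "pi_map M (C \<inter> open_sets M) = C"
proof -
  have q: "quasipoint (borel_sets M) C" using q2D[OF assms(2)] .
  have qg: "quasipoint (open_sets M) (C \<inter> open_sets M)" using g_qp[OF assms] .
  have p: "pi_map M (C \<inter> open_sets M) \<in> quasipoints2 M" using part1[OF assms(1) qg] .
  have sub: "pi_map M (C \<inter> open_sets M) \<subseteq> C"
  proof
    fix A assume A: "A \<in> pi_map M (C \<inter> open_sets M)"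
    then have Ab: "A \<in> borel_sets M" and "\<exists>U\<in>C \<inter> open_sets M. meagre_in M (sym_diff A U)"
      using pi_mem[of "C \<inter> open_sets M" M A] by auto
    then obtain U where U: "U \<in> C" "meagre_in M (sym_diff A U)" by blast
    have "sym_diff U A = sym_diff A U" by blast
    then show "A \<in> C" using q2_transfer[OF assms(2) U(1) Ab] U(2) by simp
  qed
  have "\<forall>B'. filterbase_in (borel_sets M) B' \<and> pi_map M (C \<inter> open_sets M) \<subseteq> B' \<longrightarrow> B' = pi_map M (C \<inter> open_sets M)"
    using p unfolding quasipoints2_def quasipoints_def quasipoint_def by blast
  moreover have "filterbase_in (borel_sets M) C" using q unfolding quasipoint_def by blast
  ultimately show ?thesis using sub spec[of _ C] by metis
qed

lemma g_pi:
  assumes "Baire_space M" "quasipoint (open_sets M) B"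
  shows "pi_map M B \<inter> open_sets M = B"
proof -
  have Bsub: "B \<subseteq> open_sets M" using assms(2) qp_sub by blast
  show ?thesis
  proof
    show "pi_map M B \<inter> open_sets M \<subseteq> B"
    proof
      fix U assume U: "U \<in> pi_map M B \<inter> open_sets M"
      then obtain V where V: "V \<in> B" "meagre_in M (sym_diff U V)" using pi_mem[OF Bsub] by blast
      show "U \<in> B" using L_open[OF assms(1,2) _ V(1) V(2)] U unfolding open_sets_def by blast
    qed
    show "B \<subseteq> pi_map M B \<inter> open_sets M"
    proof
      fix U assume U: "U \<in> B"
      have "U \<in> borel_sets M" using U Bsub borel_open unfolding open_sets_def by blast
      moreover have "meagre_in M (sym_diff U U)" using meagre_empty by simp
      ultimately have "U \<in> pi_map M B" using pi_mem[OF Bsub] U by blast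
      then show "U \<in> pi_map M B \<inter> open_sets M" using U Bsub by blast
    qed
  qed
qed

lemma basis_open: "a \<in> L \<Longrightarrow> openin (stone_spectrum L) (quasipoints_at L a)"
  unfolding stone_spectrum_def by (rule topology_generated_by_Basis) blast

lemma cont_gen:
  assumes "\<And>a. a \<in> L \<Longrightarrow> openin T (f -` quasipoints_at L a \<inter> topspace T)"
    "f ` topspace T \<subseteq> quasipoints L"
  shows "continuous_map T (stone_spectrum L) f"
proof -
  have "\<Union>{quasipoints_at L a | a. a \<in> L} = quasipoints L"
    using topsp[of L] unfolding stone_spectrum_def by simp
  then show ?thesis unfolding stone_spectrum_def
    by (intro continuous_on_generated_topo) (use assms in auto)
qed

theorem proposition3p43:
  fixes M :: "'a topology"
  assumes "Baire_space M"
  shows "(\<forall>B \<in> quasipoints (open_sets M). pi_map M B \<in> quasipoints2 M)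
    \<and> homeomorphic_map (stone_spectrum (open_sets M))
         (subtopology (stone_spectrum (borel_sets M)) (quasipoints2 M)) (pi_map M)"
proof (intro conjI)
  show P1: "\<forall>B \<in> quasipoints (open_sets M). pi_map M B \<in> quasipoints2 M"
    using part1[OF assms] unfolding quasipoints_def by blast
  have Q2sub: "quasipoints2 M \<subseteq> quasipoints (borel_sets M)" unfolding quasipoints2_def by blast
  have topY: "topspace (subtopology (stone_spectrum (borel_sets M)) (quasipoints2 M)) = quasipoints2 M"
    using Q2sub topsp[of "borel_sets M"] by (simp add: topspace_subtopology Int_absorb1)
  have topX: "topspace (stone_spectrum (open_sets M)) = quasipoints (open_sets M)" by (rule topsp)
  define g where "g = (\<lambda>C. C \<inter> open_sets M)"
  have c1: "continuous_map (stone_spectrum (open_sets M))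
         (subtopology (stone_spectrum (borel_sets M)) (quasipoints2 M)) (pi_map M)"
    unfolding continuous_map_in_subtopology
  proof (intro conjI)
    show "pi_map M \<in> topspace (stone_spectrum (open_sets M)) \<rightarrow> quasipoints2 M"
      using P1 topX by auto
    show "continuous_map (stone_spectrum (open_sets M)) (stone_spectrum (borel_sets M)) (pi_map M)"
    proof (rule cont_gen)
      show "pi_map M ` topspace (stone_spectrum (open_sets M)) \<subseteq> quasipoints (borel_sets M)"
        using P1 topX Q2sub by auto
      fix A assume A: "A \<in> borel_sets M"
      obtain W where W: "openin M W" "meagre_in M (sym_diff A W)" using baire_property[OF A] by blast
      have Wb: "W \<in> borel_sets M" using borel_open[OF W(1)] .
      have W': "meagre_in M (sym_diff W A)" using W(2) by (simp add: Un_commute)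
      have "pi_map M -` quasipoints_at (borel_sets M) A \<inter> topspace (stone_spectrum (open_sets M))
          = quasipoints_at (open_sets M) W"
      proof (intro set_eqI iffI)
        fix B assume "B \<in> pi_map M -` quasipoints_at (borel_sets M) A \<inter> topspace (stone_spectrum (open_sets M))"
        then have B: "B \<in> quasipoints (open_sets M)" "A \<in> pi_map M B"
          using topX unfolding quasipoints_at_def by auto
        have qB: "quasipoint (open_sets M) B" using B(1) unfolding quasipoints_def by simp
        have p: "pi_map M B \<in> quasipoints2 M" using P1 B(1) by blast
        have "W \<in> pi_map M B" using q2_transfer[OF p B(2) Wb W(2)] .
        then have "W \<in> B" using g_pi[OF assms qB] W(1) unfolding open_sets_def by blast
        then show "B \<in> quasipoints_at (open_sets M) W" using B(1) unfolding quasipoints_at_def by blast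
      next
        fix B assume "B \<in> quasipoints_at (open_sets M) W"
        then have B: "B \<in> quasipoints (open_sets M)" "W \<in> B" unfolding quasipoints_at_def by auto
        have qB: "quasipoint (open_sets M) B" using B(1) unfolding quasipoints_def by simp
        have p: "pi_map M B \<in> quasipoints2 M" using P1 B(1) by blast
        have "W \<in> pi_map M B" using g_pi[OF assms qB] B(2) by blast
        then have "A \<in> pi_map M B" using q2_transfer[OF p _ A W'] by blast
        then show "B \<in> pi_map M -` quasipoints_at (borel_sets M) A \<inter> topspace (stone_spectrum (open_sets M))"
          using p B(1) Q2sub topX unfolding quasipoints_at_def by auto
      qed
      moreover have "W \<in> open_sets M" using W(1) unfolding open_sets_def by simp
      ultimately show "openin (stone_spectrum (open_sets M))
          (pi_map M -` quasipoints_at (borel_sets M) A \<inter> topspace (stone_spectrum (open_sets M)))"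
        using basis_open by metis
    qed
  qed
  have c2: "continuous_map (subtopology (stone_spectrum (borel_sets M)) (quasipoints2 M))
      (stone_spectrum (open_sets M)) g"
  proof (rule cont_gen)
    show "g ` topspace (subtopology (stone_spectrum (borel_sets M)) (quasipoints2 M)) \<subseteq> quasipoints (open_sets M)"
      using g_qp[OF assms] topY unfolding g_def quasipoints_def by auto
    fix W assume W: "W \<in> open_sets M"
    have "g -` quasipoints_at (open_sets M) W \<inter> topspace (subtopology (stone_spectrum (borel_sets M)) (quasipoints2 M))
        = quasipoints_at (borel_sets M) W \<inter> quasipoints2 M"
    proof (intro set_eqI iffI)
      fix C assume "C \<in> g -` quasipoints_at (open_sets M) W \<inter> topspace (subtopology (stone_spectrum (borel_sets M)) (quasipoints2 M))"
      then show "C \<in> quasipoints_at (borel_sets M) W \<inter> quasipoints2 M"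
        using topY Q2sub unfolding g_def quasipoints_at_def by auto
    next
      fix C assume C: "C \<in> quasipoints_at (borel_sets M) W \<inter> quasipoints2 M"
      then have "g C \<in> quasipoints (open_sets M)" using g_qp[OF assms] unfolding g_def quasipoints_def by blast
      then show "C \<in> g -` quasipoints_at (open_sets M) W \<inter> topspace (subtopology (stone_spectrum (borel_sets M)) (quasipoints2 M))"
        using C W topY unfolding g_def quasipoints_at_def by auto
    qed
    moreover have "openin (stone_spectrum (borel_sets M)) (quasipoints_at (borel_sets M) W)"
      using W borel_open basis_open unfolding open_sets_def by blast
    ultimately show "openin (subtopology (stone_spectrum (borel_sets M)) (quasipoints2 M))
        (g -` quasipoints_at (open_sets M) W \<inter> topspace (subtopology (stone_spectrum (borel_sets M)) (quasipoints2 M)))"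
      unfolding openin_subtopology by blast
  qed
  have i1: "\<forall>x\<in>topspace (stone_spectrum (open_sets M)). g (pi_map M x) = x"
    using g_pi[OF assms] topX unfolding g_def quasipoints_def by auto
  have i2: "\<forall>y\<in>topspace (subtopology (stone_spectrum (borel_sets M)) (quasipoints2 M)). pi_map M (g y) = y"
    using pi_g[OF assms] topY unfolding g_def by auto
  show "homeomorphic_map (stone_spectrum (open_sets M))
         (subtopology (stone_spectrum (borel_sets M)) (quasipoints2 M)) (pi_map M)"
    unfolding homeomorphic_map_maps homeomorphic_maps_def using c1 c2 i1 i2 by blast
qed

end
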